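(* Let $(c_1,\dots,c_m)\in\mathbb{C}^m$ be such that $\prod_{j=1}^m\eta(c_j)$ is a scalar multiple of the identity matrix. Then there are two different indices $j,k\in\{1,\dots,m\}$ with $|c_j|<2$ and $|c_k|<2$.
   Context: For $c\in\mathbb{C}$, $\eta(c)=\begin{pmatrix}c&-1\\1&0\end{pmatrix}$. *)

theory Defs
  imports "HOL-Analysis.Analysis"
begin

definition eta :: "complex \<Rightarrow> complex^2^2" where
  "eta c = vector [vector [c, -1], vector [1, 0]]"

definition eta_prod :: "complex list \<Rightarrow> complex^2^2" where
  "eta_prod cs = foldr (\<lambda>c M. eta c ** M) cs (mat 1)"

end

theory Submission
  imports Defs
begin

lemma mm2: "((A::'a::comm_ring_1^2^2) ** B)$i$j = A$i$1*B$1$j + A$i$2*B$2$j"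
  by (simp add: matrix_matrix_mult_def UNIV_2)

lemma matcomm: "(X::'a::comm_ring_1^2^2) ** mat a = mat a ** X"
  by (simp add: vec_eq_iff forall_2 mm2 mat_def mult.commute)

lemma swap2: assumes "(X::'a::comm_ring_1^2^2) ** Y = mat a" "invertible X"
  shows "Y ** X = mat a"
proof -
  obtain Xi where i: "Xi ** X = mat 1" "X ** Xi = mat 1" using assms(2) invertible_def by blast
  have "Y = Xi ** mat a" using i assms(1) by (metis matrix_mul_assoc matrix_mul_lid)
  then have "Y ** X = Xi ** (X ** mat a)" by (simp add: matrix_mul_assoc matcomm)
  also have "\<dots> = mat a" using i by (metis matrix_mul_assoc matrix_mul_lid)
  finally show ?thesis .
qed

lemma eta_entries: "eta c $1$1 = c" "eta c $1$2 = -1" "eta c $2$1 = 1" "eta c $2$2 = 0"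
  by (simp_all add: eta_def vector_1 vector_2)

lemma eta_prod_Cons: "eta_prod (c#cs) = eta c ** eta_prod cs"
  by (simp add: eta_prod_def)

lemma eta_prod_append: "eta_prod (xs @ ys) = eta_prod xs ** eta_prod ys"
  by (induction xs) (simp_all add: eta_prod_def matrix_mul_assoc)

lemma det_eta_prod: "det (eta_prod cs) = 1"
proof (induction cs)
  case Nil then show ?case by (simp add: eta_prod_def)
next
  case (Cons c cs)
  have "det (eta c) = 1" by (simp add: det_2 eta_entries)
  then show ?case using Cons by (simp add: eta_prod_Cons det_mul)
qed

lemma grow:
  assumes "\<forall>c\<in>set cs. cmod c \<ge> 2" "cmod x \<ge> cmod y + 1"
  shows "cmod (x * eta_prod cs$1$1 + y * eta_prod cs$2$1)
         \<ge> cmod (x * eta_prod cs$1$2 + y * eta_prod cs$2$2) + 1"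
  using assms
proof (induction cs arbitrary: x y)
  case Nil then show ?case by (simp add: eta_prod_def mat_def)
next
  case (Cons c cs)
  let ?P = "eta_prod cs"
  have e: "\<And>j. x * (eta c ** ?P)$1$j + y * (eta c ** ?P)$2$j
        = (c*x+y) * ?P$1$j + (-x) * ?P$2$j"
    by (simp add: mm2 eta_entries algebra_simps)
  have "cmod (c*x) \<ge> 2 * cmod x" using Cons.prems(1) by (simp add: norm_mult mult_right_mono)
  moreover have "cmod (c*x+y) \<ge> cmod (c*x) - cmod y"
    by (rule norm_diff_ineq)
  ultimately have "cmod (c*x+y) \<ge> cmod (-x) + 1" using Cons.prems(2) by simp
  then have "cmod ((c*x+y) * ?P$1$1 + (-x) * ?P$2$1) \<ge> cmod ((c*x+y) * ?P$1$2 + (-x) * ?P$2$2) + 1"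
    using Cons.IH[of "-x" "c*x+y"] Cons.prems(1) by (metis list.set_intros(2))
  then show ?case by (simp only: eta_prod_Cons e)
qed

lemma lemA:
  assumes "cs \<noteq> []" "eta_prod cs = mat a"
  shows "\<exists>j. j < length cs - 1 \<and> cmod (cs ! j) < 2"
proof (rule ccontr)
  assume na: "\<not> ?thesis"
  obtain ds c where cs: "cs = ds @ [c]" using assms(1) by (metis rev_exhaust)
  have "\<forall>d\<in>set ds. cmod d \<ge> 2"
  proof
    fix d assume "d \<in> set ds"
    then obtain j where "j < length ds" "ds ! j = d" by (metis in_set_conv_nth)
    then show "cmod d \<ge> 2" using na cs by (auto simp: nth_append)
  qed
  moreover have "cmod (1::complex) \<ge> cmod (0::complex) + 1" by simp
  ultimately have g0: "cmod (1 * eta_prod ds $1$1 + 0 * eta_prod ds $2$1) \<ge> cmod (1 * eta_prod ds $1$2 + 0 * eta_prod ds $2$2) + 1" by (rule grow)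
  from g0 have g: "cmod (eta_prod ds $1$1) \<ge> cmod (eta_prod ds $1$2) + 1" by simp
  then have g: "cmod (eta_prod ds $1$1) \<ge> 1" using norm_ge_zero[of "eta_prod ds $1$2"] by linarith
  have "eta_prod [c] = eta c" by (simp add: eta_prod_def)
  then have "eta_prod cs = eta_prod ds ** eta c" using cs
    by (simp add: eta_prod_append)
  then have "(eta_prod cs)$1$2 = - eta_prod ds $1$1" by (simp add: mm2 eta_entries)
  moreover have "(eta_prod cs)$1$2 = 0" using assms(2) by (simp add: mat_def)
  ultimately show False using g by simp
qed

theorem corollary3p3:
  fixes cs :: "complex list"
  assumes "cs \<noteq> []"
    and "\<exists>a::complex. eta_prod cs = mat a"
  shows "\<exists>j k. j < length cs \<and> k < length cs \<and> j \<noteq> k \<and>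
           cmod (cs ! j) < 2 \<and> cmod (cs ! k) < 2"
proof -
  obtain a where a: "eta_prod cs = mat a" using assms(2) by blast
  define n where "n = length cs"
  have n0: "n > 0" using assms(1) n_def by simp
  obtain j0 where j0: "j0 < n - 1" "cmod (cs ! j0) < 2" using lemA[OF assms(1) a] n_def by blast
  define cs' where "cs' = rotate (Suc j0) cs"
  have sj: "Suc j0 mod n = Suc j0" using j0 by simp
  have cs'd: "cs' = drop (Suc j0) cs @ take (Suc j0) cs"
    using cs'_def rotate_drop_take sj n_def by metis
  have "eta_prod (take (Suc j0) cs) ** eta_prod (drop (Suc j0) cs) = mat a"
    using a by (metis append_take_drop_id eta_prod_append)
  moreover have "invertible (eta_prod (take (Suc j0) cs))"
    by (simp add: invertible_det_nz det_eta_prod)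
  ultimately have a': "eta_prod cs' = mat a" using swap2 cs'd eta_prod_append by metis
  have l': "length cs' = n" using cs'_def n_def by simp
  have "cs' \<noteq> []" using l' n0 by auto
  from lemA[OF this a'] l' obtain i where i: "i < n - 1" "cmod (cs' ! i) < 2" by auto
  have ci: "cs' ! i = cs ! ((Suc j0 + i) mod n)" 
  proof -
    have "i < length cs" using i n_def by simp
    from nth_rotate[OF this, of "Suc j0"] show ?thesis unfolding cs'_def n_def .
  qed
  have ne: "(Suc j0 + i) mod n \<noteq> j0"
  proof (cases "Suc j0 + i < n")
    case True then show ?thesis by simp
  next
    case False
    then have "(Suc j0 + i) mod n = (Suc j0 + i - n) mod n" using le_mod_geq by simp
    also have "\<dots> = Suc j0 + i - n" using i j0 by (intro mod_less) linarith
    finally have "(Suc j0 + i) mod n = Suc j0 + i - n" .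
    then show ?thesis using i False by simp
  qed
  show ?thesis
    apply (rule exI[of _ j0], rule exI[of _ "(Suc j0 + i) mod n"])
    using j0 i ci ne n0 n_def by auto
qed

end
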